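(* Let $ABC$ be a triangle and let $O$ be a point in its interior. Let $\alpha=d_A/h_A$, $\beta=d_B/h_B$ and $\gamma=d_C/h_C$, where $d_A,d_B,d_C$ are the distances from $O$ to the lines $BC,CA,AB$ and $h_A,h_B,h_C$ are the corresponding altitudes of the triangle. Thus $\alpha+\beta+\gamma=1$. Let $D$ be the intersection of line $CO$ with side $AB$. For a point $t$ on segment $AD$, let $F(t)$ be the second intersection of the line $tO$ with the boundary of the triangle; this point lies on side $BC$. Then $$\alpha\,\frac{tA}{tB}+\gamma\,\frac{F(t)C}{F(t)B}=\beta,$$ where $XY$ denotes the length of the segment $XY$. *)

theory Defs
  imports "HOL-Analysis.Analysis"
begin

end

theory Submission imports Defs begin

lemma infdist_homothety:
  fixes L :: "(real^2) set"
  assumes L: "affine L" "closed L" "Q \<in> L" and a: "0 < a"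
  shows "infdist (Q + a *\<^sub>R (X - Q)) L = a * infdist X L"
proof -
  have ne: "L \<noteq> {}" using L by auto
  have mem: "Q + k *\<^sub>R (y - Q) \<in> L" if "y \<in> L" for y k
  proof -
    have "(1 - k) *\<^sub>R Q + k *\<^sub>R y \<in> L" using mem_affine[OF L(1) L(3) that] by simp
    moreover have "(1 - k) *\<^sub>R Q + k *\<^sub>R y = Q + k *\<^sub>R (y - Q)" by (simp add: algebra_simps)
    ultimately show ?thesis by simp
  qed
  have dd: "dist (Q + k *\<^sub>R (X - Q)) (Q + k *\<^sub>R (y - Q)) = \<bar>k\<bar> * dist X y" for k y
  proof -
    have "(Q + k *\<^sub>R (X - Q)) - (Q + k *\<^sub>R (y - Q)) = k *\<^sub>R (X - y)" by (simp add: algebra_simps)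
    thus ?thesis by (simp add: dist_norm)
  qed
  obtain y where y: "y \<in> L" "infdist X L = dist X y" using infdist_attains_inf[OF L(2) ne] by metis
  have le1: "infdist (Q + a *\<^sub>R (X - Q)) L \<le> a * infdist X L"
    using infdist_le[OF mem[OF y(1), of a], of "Q + a *\<^sub>R (X - Q)"] dd[of a y] y a by simp
  obtain z where z: "z \<in> L" "infdist (Q + a *\<^sub>R (X - Q)) L = dist (Q + a *\<^sub>R (X - Q)) z"
    using infdist_attains_inf[OF L(2) ne] by metis
  define y' where "y' = Q + (1/a) *\<^sub>R (z - Q)"
  have y'L: "y' \<in> L" using mem[OF z(1)] y'_def by simp
  have zz: "z = Q + a *\<^sub>R (y' - Q)" using a by (simp add: y'_def algebra_simps)
  have "infdist X L \<le> dist X y'" using infdist_le[OF y'L] .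
  hence "a * infdist X L \<le> a * dist X y'" using a by simp
  also have "\<dots> = infdist (Q + a *\<^sub>R (X - Q)) L" using z(2) zz dd[of a y'] a by simp
  finally show ?thesis using le1 by simp
qed

lemma bary_unique:
  fixes A B C :: "real^2"
  assumes "\<not> collinear {A, B, C}"
    and "x1 *\<^sub>R A + y1 *\<^sub>R B + z1 *\<^sub>R C = x2 *\<^sub>R A + y2 *\<^sub>R B + z2 *\<^sub>R C"
    and "x1 + y1 + z1 = x2 + y2 + z2"
  shows "x1 = x2 \<and> y1 = y2 \<and> z1 = z2"
proof -
  define x where "x = x1 - x2"
  define z where "z = z1 - z2"
  have yy: "y1 - y2 = - x - z" using assms(3) x_def z_def by simp
  have "x *\<^sub>R A + (y1 - y2) *\<^sub>R B + z *\<^sub>R C = 0"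
    using assms(2) unfolding x_def z_def by (simp add: algebra_simps)
  hence e: "x *\<^sub>R (A - B) + z *\<^sub>R (C - B) = 0" using yy by (simp add: algebra_simps)
  have nc: "\<not> collinear {0, A - B, C - B}" using assms(1) collinear_3[of A B C] by simp
  have "z = 0"
  proof (rule ccontr)
    assume "z \<noteq> 0"
    hence "C - B = (- x / z) *\<^sub>R (A - B)" using e
      by (metis (no_types, lifting) add.inverse_unique divide_inverse_commute inverse_eq_divide scaleR_minus_left scaleR_scaleR eq_vector_fraction_iff)
    thus False using nc collinear_lemma by blast
  qed
  moreover have "x = 0"
  proof (rule ccontr)
    assume "x \<noteq> 0"
    with e \<open>z = 0\<close> have "A - B = 0" by simp
    thus False using nc collinear_lemma by blast
  qed
  ultimately show ?thesis using yy x_def z_def by simp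
qed

lemma ratio_line:
  fixes A B C P :: "real^2"
  assumes nc: "\<not> collinear {A, B, C}" and P: "P = a *\<^sub>R A + b *\<^sub>R B + c *\<^sub>R C"
    and s: "a + b + c = 1" and pos: "0 < a" "0 < b" "0 < c"
  shows "infdist P (affine hull {B, C}) / infdist A (affine hull {B, C}) = a"
proof -
  define L where "L = affine hull {B, C}"
  define Q where "Q = (b/(b+c)) *\<^sub>R B + (c/(b+c)) *\<^sub>R C"
  have "b/(b+c) + c/(b+c) = 1" using pos by (simp add: add_divide_distrib[symmetric])
  hence QL: "Q \<in> L" unfolding L_def affine_hull_2 Q_def by blast
  have bcQ: "(b+c) *\<^sub>R Q = b *\<^sub>R B + c *\<^sub>R C" using pos
    by (simp add: Q_def scaleR_add_right)
  have "Q + a *\<^sub>R (A - Q) = a *\<^sub>R A + (1 - a) *\<^sub>R Q" by (simp add: algebra_simps)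
  also have "1 - a = b + c" using s by simp
  finally have PQ: "P = Q + a *\<^sub>R (A - Q)" using P bcQ by (simp add: algebra_simps)
  have "A \<notin> L"
  proof
    assume "A \<in> L"
    hence "collinear {B, C, A}" unfolding L_def by (rule affine_hull_3_imp_collinear)
    thus False using nc by (simp add: insert_commute)
  qed
  hence "infdist A L \<noteq> 0" unfolding L_def using in_closed_iff_infdist_zero[of L A]
    by (metis L_def closed_affine_hull empty_iff hull_subset insert_subset subset_empty QL)
  moreover have "infdist P L = a * infdist A L"
    unfolding PQ by (rule infdist_homothety) (use QL pos in \<open>auto simp: L_def\<close>)
  ultimately show ?thesis unfolding L_def by simp
qed

theorem lemma7p1:
  fixes A B C P D :: "real^2" and \<alpha> \<beta> \<gamma> :: real
  assumes tri: "\<not> collinear {A, B, C}"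
    and O_in: "P \<in> interior (convex hull {A, B, C})"
    and \<alpha>_def: "\<alpha> = infdist P (affine hull {B, C}) / infdist A (affine hull {B, C})"
    and \<beta>_def: "\<beta> = infdist P (affine hull {C, A}) / infdist B (affine hull {C, A})"
    and \<gamma>_def: "\<gamma> = infdist P (affine hull {A, B}) / infdist C (affine hull {A, B})"
    and D: "D \<in> closed_segment A B" "collinear {C, P, D}"
  shows "\<forall>t \<in> closed_segment A D.
           (\<exists>F \<in> closed_segment B C. collinear {t, P, F}) \<and>
           (\<forall>F \<in> closed_segment B C. collinear {t, P, F} \<longrightarrow>
              \<alpha> * (dist t A / dist t B) + \<gamma> * (dist F C / dist F B) = \<beta>)"
proof -
  obtain a b c where pos: "0 < a" "0 < b" "0 < c" and s: "a + b + c = 1"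
    and P: "P = a *\<^sub>R A + b *\<^sub>R B + c *\<^sub>R C"
    using O_in interior_convex_hull_3_minimal[OF tri] by auto
  have al: "\<alpha> = a" unfolding \<alpha>_def by (rule ratio_line[OF tri P s pos])
  have tri2: "\<not> collinear {B, C, A}" using tri by (simp add: insert_commute)
  have tri3: "\<not> collinear {C, A, B}" using tri by (simp add: insert_commute)
  have be: "\<beta> = b" unfolding \<beta>_def
    by (rule ratio_line[OF tri2 _ _ pos(2,3,1)]) (use P s in \<open>auto simp: algebra_simps\<close>)
  have ga: "\<gamma> = c" unfolding \<gamma>_def
    by (rule ratio_line[OF tri3 _ _ pos(3,1,2)]) (use P s in \<open>auto simp: algebra_simps\<close>)
  obtain d where d: "0 \<le> d" "d \<le> 1" and Dd: "D = (1 - d) *\<^sub>R A + d *\<^sub>R B"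
    using D(1) unfolding closed_segment_def by auto
  have "C \<noteq> D"
  proof
    assume "C = D"
    hence "0 *\<^sub>R A + 0 *\<^sub>R B + 1 *\<^sub>R C = (1 - d) *\<^sub>R A + d *\<^sub>R B + 0 *\<^sub>R C" using Dd by simp
    from bary_unique[OF tri this] show False by simp
  qed
  then obtain u where u: "P = u *\<^sub>R C + (1 - u) *\<^sub>R D" using D(2) collinear_3_expand by blast
  have "a *\<^sub>R A + b *\<^sub>R B + c *\<^sub>R C = ((1-u) * (1-d)) *\<^sub>R A + ((1-u) * d) *\<^sub>R B + u *\<^sub>R C"
    using P u Dd by (simp add: algebra_simps)
  from bary_unique[OF tri this] s
  have abc: "a = (1-u) * (1-d)" "b = (1-u) * d" "c = u" by (auto simp: algebra_simps)
  have d1: "d < 1" using abc pos d by (cases "d = 1") auto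
  show ?thesis
  proof
    fix t assume "t \<in> closed_segment A D"
    then obtain w where w: "0 \<le> w" "w \<le> 1" and tw: "t = (1 - w) *\<^sub>R A + w *\<^sub>R D"
      unfolding closed_segment_def by auto
    define q where "q = w * d"
    have s0: "0 \<le> q" "q \<le> d" using w d unfolding q_def by (auto simp: mult_left_le_one_le)
    have ts: "t = (1 - q) *\<^sub>R A + q *\<^sub>R B" using tw Dd unfolding q_def by (simp add: algebra_simps)
    have s1: "q < 1" using s0 d1 by simp
    have bary: "x *\<^sub>R t + (1 - x) *\<^sub>R ((1 - r) *\<^sub>R B + r *\<^sub>R C)
       = (x * (1-q)) *\<^sub>R A + (x*q + (1-x) * (1-r)) *\<^sub>R B + ((1-x) * r) *\<^sub>R C" for x r
      unfolding ts by (simp add: algebra_simps)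
    show "(\<exists>F \<in> closed_segment B C. collinear {t, P, F}) \<and>
           (\<forall>F \<in> closed_segment B C. collinear {t, P, F} \<longrightarrow>
              \<alpha> * (dist t A / dist t B) + \<gamma> * (dist F C / dist F B) = \<beta>)"
    proof
      have pos1: "1 - q - a > 0"
      proof -
        have "1 - d - a = c * (1 - d)" using abc by (simp add: algebra_simps)
        moreover have "c * (1 - d) > 0" using pos d1 by simp
        ultimately show ?thesis using s0 by linarith
      qed
      define r where "r = c * (1 - q) / (1 - q - a)"
      define v where "v = a / (1 - q)"
      have r0: "0 \<le> r" unfolding r_def using pos pos1 s1 by simp
      have "c * (1 - q) \<le> 1 - q - a"
      proof -
        have "1 - u > 0" using abc(2) pos(2) d(1) by (auto simp: zero_less_mult_iff)
        hence "a \<le> (1 - u) * (1 - q)" using abc s0 by (simp add: mult_left_mono)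
        thus ?thesis using abc by (simp add: algebra_simps)
      qed
      hence r1: "r \<le> 1" unfolding r_def using pos1 by simp
      define F where "F = (1 - r) *\<^sub>R B + r *\<^sub>R C"
      have FBC: "F \<in> closed_segment B C" unfolding F_def closed_segment_def using r0 r1 by auto
      have c1: "v * (1 - q) = a" unfolding v_def using s1 by simp
      have "1 - v = (1 - q - a) / (1 - q)" unfolding v_def using s1 by (simp add: field_simps)
      hence c3: "(1 - v) * r = c" unfolding r_def using s1 pos1 by simp
      have c2: "v * q + (1 - v) * (1 - r) = b"
      proof -
        have "v * (1 - q) + (v * q + (1 - v) * (1 - r)) + (1 - v) * r = 1" by (simp add: algebra_simps)
        thus ?thesis using c1 c3 s by linarith
      qed
      have "P = v *\<^sub>R t + (1 - v) *\<^sub>R F" unfolding F_def bary c1 c2 c3 P ..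
      hence "collinear {t, P, F}" using collinear_3_expand by blast
      thus "\<exists>F \<in> closed_segment B C. collinear {t, P, F}" using FBC by blast
    next
      show "\<forall>F \<in> closed_segment B C. collinear {t, P, F} \<longrightarrow>
              \<alpha> * (dist t A / dist t B) + \<gamma> * (dist F C / dist F B) = \<beta>"
      proof (intro ballI impI)
        fix F assume "F \<in> closed_segment B C" "collinear {t, P, F}"
        then obtain r where r: "0 \<le> r" "r \<le> 1" and Fr: "F = (1 - r) *\<^sub>R B + r *\<^sub>R C"
          unfolding closed_segment_def by auto
        have "t \<noteq> F"
        proof
          assume "t = F"
          hence "(1 - q) *\<^sub>R A + q *\<^sub>R B + 0 *\<^sub>R C = 0 *\<^sub>R A + (1 - r) *\<^sub>R B + r *\<^sub>R C"
            using ts Fr by simp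
          from bary_unique[OF tri this] s1 show False by simp
        qed
        then obtain v where v: "P = v *\<^sub>R t + (1 - v) *\<^sub>R F"
          using \<open>collinear {t, P, F}\<close> collinear_3_expand by blast
        have "a *\<^sub>R A + b *\<^sub>R B + c *\<^sub>R C
           = (v * (1 - q)) *\<^sub>R A + (v * q + (1 - v) * (1 - r)) *\<^sub>R B + ((1 - v) * r) *\<^sub>R C"
          using P v Fr bary by simp
        from bary_unique[OF tri this] s
        have e: "a = v * (1-q)" "b = v * q + (1-v) * (1-r)" "c = (1-v) * r"
          by (auto simp: algebra_simps)
        have rp: "r > 0" using e(3) pos r(1) by (cases "r = 0") auto
        have AB: "dist A B > 0" using tri by (auto simp: insert_commute)
        have BC: "dist B C > 0" using tri by (auto simp: insert_commute)
        have "t - A = q *\<^sub>R (B - A)" using ts by (simp add: algebra_simps)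
        hence dtA: "dist t A = q * dist A B" using s0 by (simp add: dist_norm norm_minus_commute)
        have "t - B = (1 - q) *\<^sub>R (A - B)" using ts by (simp add: algebra_simps)
        hence dtB: "dist t B = (1 - q) * dist A B" using s1 by (simp add: dist_norm)
        have "F - C = (1 - r) *\<^sub>R (B - C)" using Fr by (simp add: algebra_simps)
        hence dFC: "dist F C = (1 - r) * dist B C" using r by (simp add: dist_norm)
        have "F - B = r *\<^sub>R (C - B)" using Fr by (simp add: algebra_simps)
        hence dFB: "dist F B = r * dist B C" using r by (simp add: dist_norm norm_minus_commute)
        have "a * (q * dist A B / ((1 - q) * dist A B)) = v * q" using e(1) s1 AB by simp
        moreover have "c * ((1 - r) * dist B C / (r * dist B C)) = (1 - v) * (1 - r)"
          using e(3) rp BC by simp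
        ultimately show "\<alpha> * (dist t A / dist t B) + \<gamma> * (dist F C / dist F B) = \<beta>"
          unfolding al be ga dtA dtB dFC dFB using e(2) by simp
      qed
    qed
  qed
qed

end
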